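(* Let $d\ge1$, $n\ge1$, and let $\{\boldsymbol{x}_i\}_{i=1}^n$ be an $n$-point jittered sampling point process on $\mathbb{S}^d$ associated with a partition $\{D_{i,n}\}_{i=1}^n$ and constant $c$ as described in the context. Then \[ \frac{n^2}{d+1}\le\mathbb{E}\big(\mathrm{FP}(\{\boldsymbol{x}_i\}_{i=1}^n)\big)\le\frac{n^2}{d+1}+n-n\left(1-\frac{c^2}{2n^{2/d}}\right)^2. \]
   Context: $\mathbb{S}^d=\{\boldsymbol{x}\in\mathbb{R}^{d+1}:\|\boldsymbol{x}\|=1\}$, $\sigma_d$ the normalized surface measure, $\mathrm{diam}\,A=\sup\{\|\boldsymbol{x}-\boldsymbol{y}\|:\boldsymbol{x},\boldsymbol{y}\in A\}$. Frame potential: $\mathrm{FP}(\{\boldsymbol{x}_i\}_{i=1}^n)=\sum_{i,j=1}^n|\langle\boldsymbol{x}_i,\boldsymbol{x}_j\rangle|^2$. Jittered sampling point process: let $\{D_{i,n}\}_{i=1}^n$ be an equal-area partition of $\mathbb{S}^d$: $\bigcup_{j=1}^nD_{j,n}=\mathbb{S}^d$, $\sigma_d(D_{j,n}\cap D_{k,n})=0$ for $j\ne k$, $\sigma_d(D_{j,n})=1/n$, and $\mathrm{diam}\,D_{j,n}\le c/n^{1/d}<\sqrt2$ for all $j$, where $c$ is a constant independent of $n$. Independently for each $i$, let $\boldsymbol{x}_i$ be a point chosen uniformly at random (w.r.t. normalized $\sigma_d$ restricted to $D_{i,n}$) from $D_{i,n}$. *)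

theory Defs
  imports "HOL-Probability.Probability"
begin

text \<open>Normalized surface measure on the unit sphere of a Euclidean space, realised as
  the cone measure: the push-forward of the uniform (normalized Lebesgue) distribution on
  the open unit ball under radial projection. It is a measure on the Borel sets of the
  ambient space, concentrated on the unit sphere.\<close>
definition sphere_measure :: "'a::euclidean_space measure" where
  "sphere_measure = distr (uniform_measure lborel (ball 0 1)) borel (\<lambda>x. x /\<^sub>R norm x)"

definition jittered :: "nat \<Rightarrow> (nat \<Rightarrow> 'a::euclidean_space set) \<Rightarrow> (nat \<Rightarrow> 'a) measure" where
  "jittered n D = PiM {..<n} (\<lambda>i. uniform_measure sphere_measure (D i))"

definition frame_potential :: "nat \<Rightarrow> (nat \<Rightarrow> 'a::real_inner) \<Rightarrow> real" where
  "frame_potential n x = (\<Sum>i<n. \<Sum>j<n. \<bar>x i \<bullet> x j\<bar>^2)"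

end

theory Submission
  imports Defs "HOL-Analysis.Analysis"
begin


definition U :: "'a::euclidean_space measure" where
  "U = uniform_measure lborel (ball 0 1)"

lemma ball_pos: "emeasure lborel (ball (0::'a::euclidean_space) 1) \<noteq> 0"
proof -
  have "unit_ball_vol (real DIM('a)) > 0" by (rule unit_ball_vol_pos) simp
  hence "unit_ball_vol (real DIM('a)) \<noteq> 0" by linarith
  thus ?thesis by (simp add: emeasure_ball)
qed

lemma prob_U: "prob_space (U :: 'a::euclidean_space measure)"
  unfolding U_def using ball_pos emeasure_lborel_ball_finite
  by (intro prob_space_uniform_measure) (auto simp: less_top)

lemma sets_U[simp, measurable_cong]: "sets (U :: 'a::euclidean_space measure) = sets borel"
  by (simp add: U_def)

lemma sets_sphere_measure[simp, measurable_cong]: "sets (sphere_measure :: 'a::euclidean_space measure) = sets borel"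
  by (simp add: sphere_measure_def)

lemma space_sphere_measure[simp]: "space (sphere_measure :: 'a::euclidean_space measure) = UNIV"
  by (simp add: sphere_measure_def)

lemma sphere_measure_U: "sphere_measure = distr U borel (\<lambda>x::'a::euclidean_space. x /\<^sub>R norm x)"
  by (simp add: sphere_measure_def U_def)

lemma prob_sphere: "prob_space (sphere_measure :: 'a::euclidean_space measure)"
  unfolding sphere_measure_U
  by (intro prob_space.prob_space_distr prob_U) measurable

lemma AE_U_nz: "AE x in (U :: 'a::euclidean_space measure). x \<noteq> 0"
  unfolding U_def
  apply (rule AE_uniform_measureI)
   apply simp
  apply (rule AE_I[where N="{0}"])
    apply auto
  done

lemma AE_sphere_norm: "AE x in (sphere_measure :: 'a::euclidean_space measure). norm x = 1"
  unfolding sphere_measure_U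
  apply (subst AE_distr_iff)
    apply measurable[1]
  using borel_closed[OF closed_sphere[of "0::'a" 1]] apply (simp add: sphere_def dist_norm)
  apply (rule AE_mp[OF AE_U_nz])
  apply (rule AE_I2)
  apply simp
  done



lemma inner_lin_comb:
  fixes i :: "'a::euclidean_space"
  assumes "i \<in> Basis"
  shows "(\<Sum>j\<in>Basis. f j *\<^sub>R j) \<bullet> i = f i"
  using assms by (simp add: inner_sum_left inner_Basis if_distrib cong: if_cong)

lemma U_inv:
  fixes T :: "'a::euclidean_space \<Rightarrow> 'a"
  assumes Tm[measurable]: "T \<in> borel_measurable borel" and nT: "\<And>x. norm (T x) = norm x"
    and L: "distr lborel borel T = lborel"
  shows "distr U borel T = U"
proof (rule measure_eqI)
  show "sets (distr U borel T) = sets U" by simp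
  fix A assume A: "A \<in> sets (distr U borel T)"
  hence A'[measurable]: "A \<in> sets borel" by simp
  have TA[measurable]: "T -` A \<in> sets borel" using measurable_sets_borel[OF Tm A'] by simp
  have pre: "ball 0 1 \<inter> T -` A = T -` (A \<inter> ball 0 1)" using nT by auto
  have "emeasure (distr U borel T) A = emeasure U (T -` A)"
    using A' by (simp add: emeasure_distr U_def)
  also have "\<dots> = emeasure lborel (ball 0 1 \<inter> T -` A) / emeasure lborel (ball (0::'a) 1)"
    unfolding U_def by (subst emeasure_uniform_measure) auto
  also have "emeasure lborel (ball 0 1 \<inter> T -` A) = emeasure (distr lborel borel T) (A \<inter> ball 0 1)"
    by (subst emeasure_distr) (auto simp: pre)
  also have "\<dots> = emeasure lborel (A \<inter> ball 0 1)" by (simp add: L)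
  finally show "emeasure (distr U borel T) A = emeasure U A" using A' by (simp add: U_def Int_commute)
qed

lemma sphere_inv:
  fixes T :: "'a::euclidean_space \<Rightarrow> 'a"
  assumes Tm[measurable]: "T \<in> borel_measurable borel" and nT: "\<And>x. norm (T x) = norm x"
    and L: "distr lborel borel T = lborel" and lin: "linear T"
  shows "distr sphere_measure borel T = sphere_measure"
proof -
  let ?N = "\<lambda>x::'a. x /\<^sub>R norm x"
  have comm: "T (?N x) = ?N (T x)" for x
    using lin nT by (simp add: linear_cmul)
  have "distr (distr U borel ?N) borel T = distr U borel (\<lambda>x. T (?N x))"
    by (subst distr_distr) (auto simp: comp_def)
  also have "\<dots> = distr U borel (\<lambda>x. ?N (T x))" by (simp add: comm)
  also have "\<dots> = distr (distr U borel T) borel ?N"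
    by (subst distr_distr) (auto simp: comp_def)
  also have "\<dots> = distr U borel ?N" using U_inv[OF Tm nT L] by simp
  finally show ?thesis unfolding sphere_measure_U .
qed



lemma linear_borel: "linear (T::'a::euclidean_space \<Rightarrow> 'b::euclidean_space) \<Longrightarrow> T \<in> borel_measurable borel"
  by (intro borel_measurable_continuous_onI linear_continuous_on) (simp add: linear_conv_bounded_linear)

definition rflx :: "'a::euclidean_space \<Rightarrow> 'a \<Rightarrow> 'a" where
  "rflx b x = (\<Sum>j\<in>Basis. ((if j = b then -1 else 1) * (x \<bullet> j)) *\<^sub>R j)"

definition pswap :: "'a \<Rightarrow> 'a \<Rightarrow> 'a \<Rightarrow> 'a" where
  "pswap b b' j = (if j = b then b' else if j = b' then b else j)"

definition sw :: "'a::euclidean_space \<Rightarrow> 'a \<Rightarrow> 'a \<Rightarrow> 'a" where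
  "sw b b' x = (\<Sum>j\<in>Basis. (x \<bullet> pswap b b' j) *\<^sub>R j)"

lemma rflx_inner: "i \<in> Basis \<Longrightarrow> rflx b x \<bullet> i = (if i = b then -1 else 1) * (x \<bullet> i)"
  unfolding rflx_def by (rule inner_lin_comb)

lemma sw_inner: "i \<in> Basis \<Longrightarrow> sw b b' x \<bullet> i = x \<bullet> pswap b b' i"
  unfolding sw_def by (rule inner_lin_comb)

lemma rflx_linear: "linear (rflx b)"
  unfolding rflx_def
  by (auto simp: linear_iff inner_add_left algebra_simps sum.distrib scaleR_sum_right)

lemma sw_linear: "linear (sw b b')"
  unfolding sw_def
  by (auto simp: linear_iff inner_add_left algebra_simps sum.distrib scaleR_sum_right)

lemma rflx_norm: "norm (rflx b x) = norm x"
proof -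
  have "rflx b x \<bullet> rflx b x = x \<bullet> x"
    by (subst (1 2) euclidean_inner) (auto simp: rflx_inner intro!: sum.cong)
  thus ?thesis by (simp add: norm_eq_sqrt_inner)
qed

lemma pswap_bij: "b \<in> Basis \<Longrightarrow> b' \<in> Basis \<Longrightarrow> bij_betw (pswap b b') Basis Basis"
  by (rule bij_betwI[where g="pswap b b'"]) (auto simp: pswap_def)

lemma pswap_inv[simp]: "pswap b b' (pswap b b' j) = j"
  by (auto simp: pswap_def)

lemma sw_norm:
  assumes "b \<in> Basis" "b' \<in> Basis"
  shows "norm (sw b b' x) = norm x"
proof -
  have "sw b b' x \<bullet> sw b b' x = (\<Sum>j\<in>Basis. (x \<bullet> pswap b b' j) * (x \<bullet> pswap b b' j))"
    by (subst euclidean_inner) (auto simp: sw_inner intro!: sum.cong)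
  also have "\<dots> = (\<Sum>j\<in>Basis. (x \<bullet> j) * (x \<bullet> j))"
    using sum.reindex_bij_betw[OF pswap_bij[OF assms], of "\<lambda>j. (x \<bullet> j) * (x \<bullet> j)"] by simp
  also have "\<dots> = x \<bullet> x" by (simp add: euclidean_inner[of x x])
  finally show ?thesis by (simp add: norm_eq_sqrt_inner)
qed

lemma rflx_lborel: "distr lborel borel (rflx b) = (lborel :: 'a::euclidean_space measure)"
proof -
  have "lborel = density (distr lborel borel (\<lambda>x::'a. 0 + (\<Sum>j\<in>Basis. ((if j = b then -1 else 1) * (x \<bullet> j)) *\<^sub>R j)))
      (\<lambda>_. (\<Prod>j\<in>Basis. \<bar>(if j = b then -1 else 1 :: real)\<bar>))"
    by (rule lborel_affine_euclidean) auto
  also have "(\<lambda>_::'a. ennreal (\<Prod>j\<in>Basis. \<bar>(if j = b then -1 else 1 :: real)\<bar>)) = (\<lambda>_. 1)"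
    by (simp add: if_distrib cong: if_cong)
  finally show ?thesis by (simp add: density_1 rflx_def[abs_def])
qed

lemma sw_lborel:
  assumes b: "b \<in> Basis" "b' \<in> Basis"
  shows "distr lborel borel (sw b b') = (lborel :: 'a::euclidean_space measure)"
proof (rule lborel_eqI[symmetric])
  have [measurable]: "sw b b' \<in> borel_measurable borel" by (rule linear_borel[OF sw_linear])
  fix l u :: 'a assume le: "\<And>i. i \<in> Basis \<Longrightarrow> l \<bullet> i \<le> u \<bullet> i"
  have pre: "sw b b' -` box l u = box (sw b b' l) (sw b b' u)"
  proof -
    have "x \<in> sw b b' -` box l u \<longleftrightarrow> x \<in> box (sw b b' l) (sw b b' u)" for x
    proof -
      have "x \<in> sw b b' -` box l u \<longleftrightarrow> (\<forall>j\<in>Basis. l \<bullet> j < x \<bullet> pswap b b' j \<and> x \<bullet> pswap b b' j < u \<bullet> j)"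
        by (simp add: mem_box sw_inner)
      also have "\<dots> \<longleftrightarrow> (\<forall>k\<in>Basis. l \<bullet> pswap b b' k < x \<bullet> k \<and> x \<bullet> k < u \<bullet> pswap b b' k)"
        using bij_betw_apply[OF pswap_bij[OF b]] by (metis pswap_inv)
      also have "\<dots> \<longleftrightarrow> x \<in> box (sw b b' l) (sw b b' u)"
        by (simp add: mem_box sw_inner)
      finally show ?thesis .
    qed
    thus ?thesis by blast
  qed
  have "emeasure (distr lborel borel (sw b b')) (box l u) = emeasure lborel (box (sw b b' l) (sw b b' u))"
    by (subst emeasure_distr) (auto simp: pre)
  also have "\<dots> = (\<Prod>k\<in>Basis. (u - l) \<bullet> pswap b b' k)"
    using le bij_betw_apply[OF pswap_bij[OF b]]
    by (subst emeasure_lborel_box_eq) (auto simp: sw_inner inner_diff_left intro!: prod.cong)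
  also have "(\<Prod>k\<in>Basis. (u - l) \<bullet> pswap b b' k) = (\<Prod>k\<in>Basis. (u - l) \<bullet> k)"
    using prod.reindex_bij_betw[OF pswap_bij[OF b], of "\<lambda>j. (u - l) \<bullet> j"] by simp
  finally show "emeasure (distr lborel borel (sw b b')) (box l u) = (\<Prod>k\<in>Basis. (u - l) \<bullet> k)" .
qed simp



lemma integ_bounded:
  fixes P :: "'a::euclidean_space measure" and f :: "'a \<Rightarrow> real"
  assumes "prob_space P" "sets P = sets borel" "AE x in P. norm x = 1"
    and f: "f \<in> borel_measurable borel" and B: "\<And>x. norm x = 1 \<Longrightarrow> \<bar>f x\<bar> \<le> B"
  shows "integrable P f"
proof -
  interpret prob_space P by fact
  show ?thesis
  proof (rule integrable_const_bound[where B=B])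
    show "AE x in P. norm (f x) \<le> B" using assms(3) by (rule AE_mp) (auto intro!: AE_I2 B)
    show "f \<in> borel_measurable P" using f measurable_cong_sets[OF assms(2) refl] by blast
  qed
qed

lemma integ_inner2:
  fixes P :: "'a::euclidean_space measure"
  assumes "prob_space P" "sets P = sets borel" "AE x in P. norm x = 1" "b \<in> Basis" "b' \<in> Basis"
  shows "integrable P (\<lambda>x. (x \<bullet> b) * (x \<bullet> b'))"
proof (rule integ_bounded[OF assms(1-3), where B=1])
  fix x :: 'a assume "norm x = 1"
  then have "\<bar>x \<bullet> b\<bar> \<le> 1" "\<bar>x \<bullet> b'\<bar> \<le> 1" using Basis_le_norm assms(4,5) by metis+
  thus "\<bar>(x \<bullet> b) * (x \<bullet> b')\<bar> \<le> 1" by (simp add: abs_mult mult_le_one)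
qed simp

definition mom :: "'a::euclidean_space measure \<Rightarrow> 'a \<Rightarrow> 'a \<Rightarrow> real" where
  "mom P b b' = (\<integral>x. (x \<bullet> b) * (x \<bullet> b') \<partial>P)"

lemma sphere_int_inv:
  fixes T :: "'a::euclidean_space \<Rightarrow> 'a" and f :: "'a \<Rightarrow> real"
  assumes nT: "\<And>x. norm (T x) = norm x"
    and L: "distr lborel borel T = lborel" and lin: "linear T" and f: "f \<in> borel_measurable borel"
  shows "(\<integral>x. f x \<partial>sphere_measure) = (\<integral>x. f (T x) \<partial>sphere_measure)"
proof -
  have Tm: "T \<in> borel_measurable borel" by (rule linear_borel[OF lin])
  have Tm': "T \<in> sphere_measure \<rightarrow>\<^sub>M borel" using Tm measurable_cong_sets[OF sets_sphere_measure refl] by blast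
  have "(\<integral>x. f x \<partial>sphere_measure) = (\<integral>x. f x \<partial>distr sphere_measure borel T)"
    by (simp add: sphere_inv[OF Tm nT L lin])
  also have "\<dots> = (\<integral>x. f (T x) \<partial>sphere_measure)" by (rule integral_distr[OF Tm' f])
  finally show ?thesis .
qed

lemma mom_off:
  assumes "b \<in> Basis" "b' \<in> Basis" "b \<noteq> b'"
  shows "mom (sphere_measure::'a::euclidean_space measure) b b' = 0"
proof -
  have "mom (sphere_measure::'a measure) b b' = (\<integral>x. (rflx b x \<bullet> b) * (rflx b x \<bullet> b') \<partial>sphere_measure)"
    unfolding mom_def by (rule sphere_int_inv[OF rflx_norm rflx_lborel rflx_linear]) simp
  also have "\<dots> = (\<integral>x. - ((x \<bullet> b) * (x \<bullet> b')) \<partial>sphere_measure)"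
    using assms by (simp add: rflx_inner)
  also have "\<dots> = - mom sphere_measure b b'" by (simp add: mom_def)
  finally show ?thesis by simp
qed

lemma mom_diag_eq:
  fixes b b' :: "'a::euclidean_space"
  assumes "b \<in> Basis" "b' \<in> Basis"
  shows "mom (sphere_measure::'a::euclidean_space measure) b b = mom sphere_measure b' b'"
proof -
  have "mom (sphere_measure::'a measure) b b = (\<integral>x. (sw b b' x \<bullet> b) * (sw b b' x \<bullet> b) \<partial>sphere_measure)"
    unfolding mom_def by (rule sphere_int_inv[OF sw_norm[OF assms] sw_lborel[OF assms] sw_linear]) simp
  also have "\<dots> = mom sphere_measure b' b'"
    using assms by (simp add: sw_inner pswap_def mom_def)
  finally show ?thesis .
qed

lemma mom_diag:
  assumes "b \<in> Basis"
  shows "mom (sphere_measure::'a::euclidean_space measure) b b = 1 / DIM('a)"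
proof -
  have "(\<integral>x. (\<Sum>j\<in>(Basis::'a set). (x \<bullet> j) * (x \<bullet> j)) \<partial>sphere_measure) = (\<Sum>j\<in>(Basis::'a set). mom sphere_measure j j)"
    unfolding mom_def
    by (intro Bochner_Integration.integral_sum integ_inner2[OF prob_sphere sets_sphere_measure AE_sphere_norm]) auto
  hence "(\<Sum>j\<in>(Basis::'a set). mom sphere_measure j j) = (\<integral>x. (\<Sum>j\<in>(Basis::'a set). (x \<bullet> j) * (x \<bullet> j)) \<partial>sphere_measure)" by simp
  also have "\<dots> = (\<integral>x. 1 \<partial>(sphere_measure::'a measure))"
  proof (rule integral_cong_AE)
    show "AE x in sphere_measure. (\<Sum>j\<in>(Basis::'a set). (x \<bullet> j) * (x \<bullet> j)) = 1"
      using AE_sphere_norm by (rule AE_mp) (auto intro!: AE_I2 simp: euclidean_inner[symmetric] norm_eq_sqrt_inner)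
  qed auto
  also have "\<dots> = 1" using prob_space.prob_space[OF prob_sphere] by (simp add: measure_def)
  finally have "(\<Sum>j\<in>(Basis::'a set). mom sphere_measure j j) = 1" .
  moreover have "(\<Sum>j\<in>(Basis::'a set). mom sphere_measure j j) = DIM('a) * mom sphere_measure b b"
    using mom_diag_eq[OF _ assms] by simp
  ultimately show ?thesis by (simp add: field_simps)
qed



lemma unif_density:
  fixes D :: "'a::euclidean_space set" and n :: nat
  assumes "measure sphere_measure D = 1 / real n" "n \<ge> 1"
  shows "uniform_measure sphere_measure D = density sphere_measure (\<lambda>x. ennreal (real n * indicator D x))"
proof -
  interpret prob_space "sphere_measure :: 'a measure" by (rule prob_sphere)
  have e: "emeasure sphere_measure D = ennreal (1 / real n)"
    using assms(1) by (simp add: emeasure_eq_measure)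
  have "(\<lambda>x. indicator D x / emeasure sphere_measure D) = (\<lambda>x. ennreal (real n * indicator D x))"
  proof (rule ext)
    fix x
    have "1 / ennreal (1 / real n) = ennreal (real n)"
      using divide_ennreal[of 1 "1 / real n"] assms(2) by simp
    thus "indicator D x / emeasure sphere_measure D = ennreal (real n * indicator D x)"
      by (cases "x \<in> D") (simp_all add: e)
  qed
  thus ?thesis unfolding uniform_measure_def by simp
qed

lemma unif_facts:
  fixes D :: "'a::euclidean_space set" and n :: nat
  assumes "D \<in> sets borel" "measure sphere_measure D = 1 / real n" "n \<ge> 1"
  shows "prob_space (uniform_measure sphere_measure D)"
    and "AE x in uniform_measure sphere_measure D. norm x = 1 \<and> x \<in> D"
    and "\<And>f. f \<in> borel_measurable borel \<Longrightarrow>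
         (\<integral>x. f x \<partial>uniform_measure sphere_measure D) = real n * (\<integral>x. indicator D x * f x \<partial>sphere_measure)"
proof -
  interpret prob_space "sphere_measure :: 'a measure" by (rule prob_sphere)
  have e: "emeasure sphere_measure D = ennreal (1 / real n)"
    using assms(2) by (simp add: emeasure_eq_measure)
  have e0: "emeasure sphere_measure D \<noteq> 0" "emeasure sphere_measure D \<noteq> \<infinity>"
    using assms(3) by (auto simp: e)
  show "prob_space (uniform_measure sphere_measure D)"
    by (rule prob_space_uniform_measure[OF e0])
  show "AE x in uniform_measure sphere_measure D. norm x = 1 \<and> x \<in> D"
  proof -
    have "AE x in sphere_measure. x \<in> D \<longrightarrow> norm x = 1 \<and> x \<in> D"
      using AE_sphere_norm by (rule AE_mp) (auto intro!: AE_I2)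
    then show ?thesis by (subst AE_uniform_measure) (use e0 in \<open>auto simp: less_top[symmetric]\<close>)
  qed
  fix f :: "'a \<Rightarrow> real" assume f[measurable]: "f \<in> borel_measurable borel"
  have "(\<integral>x. f x \<partial>uniform_measure sphere_measure D) = (\<integral>x. (real n * indicator D x) *\<^sub>R f x \<partial>sphere_measure)"
    unfolding unif_density[OF assms(2,3)]
    using assms(1) by (subst integral_density) auto
  also have "\<dots> = real n * (\<integral>x. indicator D x * f x \<partial>sphere_measure)"
    by (simp add: mult.assoc)
  finally show "(\<integral>x. f x \<partial>uniform_measure sphere_measure D) = real n * (\<integral>x. indicator D x * f x \<partial>sphere_measure)" .
qed

lemma partition_sum:
  fixes D :: "nat \<Rightarrow> 'a::euclidean_space set" and n :: nat and f :: "'a \<Rightarrow> real"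
  assumes meas: "\<And>i. i < n \<Longrightarrow> D i \<in> sets borel"
    and cover: "(\<Union>i<n. D i) = sphere 0 1"
    and disj: "\<And>j k. j < n \<Longrightarrow> k < n \<Longrightarrow> j \<noteq> k \<Longrightarrow> measure sphere_measure (D j \<inter> D k) = 0"
    and f: "f \<in> borel_measurable borel" and fint: "integrable sphere_measure f"
  shows "(\<Sum>i<n. (\<integral>x. indicator (D i) x * f x \<partial>sphere_measure)) = (\<integral>x. f x \<partial>sphere_measure)"
proof -
  interpret prob_space "sphere_measure :: 'a measure" by (rule prob_sphere)
  have null: "AE x in sphere_measure. x \<notin> D j \<inter> D k" if "j < n" "k < n" "j \<noteq> k" for j k
  proof (rule AE_not_in)
    show "D j \<inter> D k \<in> null_sets sphere_measure"
      using meas that disj[OF that] by (auto simp: null_sets_def emeasure_eq_measure)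
  qed
  have "AE x in sphere_measure. \<forall>j\<in>{..<n}. \<forall>k\<in>{..<n}. j \<noteq> k \<longrightarrow> x \<notin> D j \<inter> D k"
    using null by (auto simp: AE_finite_all)
  hence ae1: "AE x in sphere_measure. (\<Sum>i<n. indicator (D i) x) = (1::real)"
    using AE_sphere_norm
  proof eventually_elim
    case (elim x)
    then have "x \<in> sphere 0 1" by simp
    with cover obtain i where i: "i < n" "x \<in> D i" by blast
    have "(\<Sum>j<n. indicator (D j) x) = (\<Sum>j<n. if j = i then 1 else (0::real))"
      using elim i by (intro sum.cong) (auto split: split_indicator)
    also have "\<dots> = 1" using i by simp
    finally show ?case .
  qed
  have "(\<Sum>i<n. (\<integral>x. indicator (D i) x * f x \<partial>sphere_measure)) = (\<integral>x. (\<Sum>i<n. indicator (D i) x * f x) \<partial>sphere_measure)"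
    by (rule Bochner_Integration.integral_sum[symmetric])
      (use meas fint integrable_mult_indicator[of _ sphere_measure f] in \<open>auto\<close>)
  also have "\<dots> = (\<integral>x. f x \<partial>sphere_measure)"
  proof (rule integral_cong_AE)
    have fm: "f \<in> borel_measurable sphere_measure" using f by simp
    show "(\<lambda>x. \<Sum>i<n. indicator (D i) x * f x) \<in> borel_measurable sphere_measure"
      using meas by (intro borel_measurable_sum borel_measurable_times fm borel_measurable_indicator) auto
    show "f \<in> borel_measurable sphere_measure" by (rule fm)
    show "AE x in sphere_measure. (\<Sum>i<n. indicator (D i) x * f x) = f x"
      using ae1 by (rule AE_mp) (auto intro!: AE_I2 simp: sum_distrib_right[symmetric])
  qed
  finally show ?thesis .
qed



lemma inner_sq_expand:
  fixes x y :: "'a::euclidean_space"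
  shows "(x \<bullet> y)^2 = (\<Sum>b\<in>Basis. \<Sum>b'\<in>Basis. ((x \<bullet> b) * (x \<bullet> b')) * ((y \<bullet> b) * (y \<bullet> b')))"
  by (subst euclidean_inner) (simp add: power2_eq_square sum_product algebra_simps)

lemma integ_inner_sq:
  fixes P :: "'a::euclidean_space measure"
  assumes P: "prob_space P" "sets P = sets borel" "AE x in P. norm x = 1"
  shows "integrable P (\<lambda>y. (x \<bullet> y)^2)"
proof (rule integ_bounded[OF P, where B="norm x ^ 2"])
  fix y :: 'a assume "norm y = 1"
  hence "\<bar>x \<bullet> y\<bar> \<le> norm x" using Cauchy_Schwarz_ineq2[of x y] by simp
  thus "\<bar>(x \<bullet> y)^2\<bar> \<le> norm x ^ 2" using abs_le_square_iff[of "x \<bullet> y" "norm x"] by simp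
qed simp

lemma inner_int:
  fixes P :: "'a::euclidean_space measure"
  assumes P: "prob_space P" "sets P = sets borel" "AE x in P. norm x = 1"
  shows "(\<integral>y. (x \<bullet> y)^2 \<partial>P) = (\<Sum>b\<in>Basis. \<Sum>b'\<in>Basis. ((x \<bullet> b) * (x \<bullet> b')) * mom P b b')"
proof -
  have "(\<integral>y. (x \<bullet> y)^2 \<partial>P) = (\<integral>y. (\<Sum>b\<in>Basis. \<Sum>b'\<in>Basis. ((x \<bullet> b) * (x \<bullet> b')) * ((y \<bullet> b) * (y \<bullet> b'))) \<partial>P)"
    by (simp add: inner_sq_expand)
  also have "\<dots> = (\<Sum>b\<in>Basis. \<Sum>b'\<in>Basis. ((x \<bullet> b) * (x \<bullet> b')) * mom P b b')"
    unfolding mom_def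
    by (simp add: Bochner_Integration.integral_sum integrable_sum integ_inner2[OF P])
  finally show ?thesis .
qed

lemma double_bounds:
  fixes P :: "'a::euclidean_space measure" and A :: "'a set" and L :: real
  assumes P: "prob_space P" "sets P = sets borel" "AE x in P. norm x = 1"
    and AEA: "AE x in P. x \<in> A"
    and LA: "\<And>x y. x \<in> A \<Longrightarrow> y \<in> A \<Longrightarrow> norm x = 1 \<Longrightarrow> norm y = 1 \<Longrightarrow> L \<le> (x \<bullet> y)^2"
  shows "L \<le> (\<Sum>b\<in>Basis. \<Sum>b'\<in>Basis. (mom P b b')^2) \<and> (\<Sum>b\<in>Basis. \<Sum>b'\<in>Basis. (mom P b b')^2) \<le> 1"
proof -
  interpret prob_space P by fact
  define g where "g x = (\<Sum>b\<in>Basis. \<Sum>b'\<in>Basis. ((x \<bullet> b) * (x \<bullet> b')) * mom P b b')" for x :: 'a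
  have gint: "integrable P g"
    unfolding g_def by (simp add: integrable_sum integ_inner2[OF P])
  have gI: "(\<integral>x. g x \<partial>P) = (\<Sum>b\<in>Basis. \<Sum>b'\<in>Basis. (mom P b b')^2)"
    unfolding g_def
    by (simp add: Bochner_Integration.integral_sum integrable_sum integ_inner2[OF P] mom_def power2_eq_square)
  have gb: "AE x in P. L \<le> g x \<and> g x \<le> 1"
    using AEA P(3)
  proof eventually_elim
    case (elim x)
    have ge: "g x = (\<integral>y. (x \<bullet> y)^2 \<partial>P)" unfolding g_def by (rule inner_int[OF P, symmetric])
    have nx: "norm x = 1" using elim by simp
    have aey: "AE y in P. norm y = 1 \<and> y \<in> A" using AE_conjI[OF P(3) AEA] .
    have "AE y in P. L \<le> (x \<bullet> y)^2"
      using aey by (rule AE_mp) (use elim LA in \<open>auto intro!: AE_I2\<close>)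
    hence "(\<integral>y. L \<partial>P) \<le> (\<integral>y. (x \<bullet> y)^2 \<partial>P)"
      by (intro integral_mono_AE) (use integ_inner_sq[OF P] in auto)
    moreover have "(\<integral>y. (x \<bullet> y)^2 \<partial>P) \<le> (\<integral>y. 1 \<partial>P)"
    proof (rule integral_mono_AE)
      show "AE y in P. (x \<bullet> y)^2 \<le> 1"
        using P(3)
      proof eventually_elim
        case (elim y)
        have "\<bar>x \<bullet> y\<bar> \<le> 1" using Cauchy_Schwarz_ineq2[of x y] elim nx by simp
        thus ?case by (simp add: abs_square_le_1)
      qed
    qed (use integ_inner_sq[OF P] in auto)
    ultimately show ?case using ge by (simp add: prob_space)
  qed
  have "(\<integral>x. L \<partial>P) \<le> (\<integral>x. g x \<partial>P)"
    by (rule integral_mono_AE) (use gint gb in \<open>auto elim!: AE_mp intro!: AE_I2\<close>)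
  moreover have "(\<integral>x. g x \<partial>P) \<le> (\<integral>x. 1 \<partial>P)"
    by (rule integral_mono_AE) (use gint gb in \<open>auto elim!: AE_mp intro!: AE_I2\<close>)
  ultimately show ?thesis using gI by (simp add: prob_space)
qed



lemma pim_pair:
  fixes Q :: "nat \<Rightarrow> 'a::euclidean_space measure" and n i j :: nat
  assumes ps: "\<And>k. prob_space (Q k)" and st: "\<And>k. sets (Q k) = sets borel"
    and nm: "\<And>k. AE x in Q k. norm x = 1" and ij: "i < n" "j < n"
  shows "integrable (PiM {..<n} Q) (\<lambda>x. \<bar>x i \<bullet> x j\<bar>^2) \<and>
         (\<integral>x. \<bar>x i \<bullet> x j\<bar>^2 \<partial>PiM {..<n} Q) =
           (if i = j then 1 else (\<Sum>b\<in>Basis. \<Sum>b'\<in>Basis. mom (Q i) b b' * mom (Q j) b b'))"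
proof -
  interpret product_sigma_finite Q
    unfolding product_sigma_finite_def using ps prob_space_imp_sigma_finite by blast
  show ?thesis
  proof (cases "i = j")
    case True
    define G where "G k y = (if k = i then (y \<bullet> y)^2 else (1::real))" for k and y :: 'a
    have Gint: "integrable (Q k) (G k)" for k
    proof (cases "k = i")
      case True
      show ?thesis unfolding G_def using True
        by (simp, intro integ_bounded[OF ps st nm, where B=1]) (auto simp: power2_norm_eq_inner[symmetric])
    next
      case False
      interpret prob_space "Q k" by (rule ps)
      show ?thesis unfolding G_def using False by simp
    qed
    have eq: "(\<lambda>x. \<bar>x i \<bullet> x j\<bar>^2) = (\<lambda>x. \<Prod>k\<in>{..<n}. G k (x k))"
    proof
      fix x :: "nat \<Rightarrow> 'a"
      have "(\<Prod>k\<in>{..<n}. G k (x k)) = (\<Prod>k\<in>{..<n} \<inter> {i}. (x k \<bullet> x k)^2)"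
        unfolding G_def using prod.inter_restrict[of "{..<n}" "\<lambda>k. (x k \<bullet> x k)^2" "{i}"] by simp
      also have "{..<n} \<inter> {i} = {i}" using ij by auto
      finally show "\<bar>x i \<bullet> x j\<bar>^2 = (\<Prod>k\<in>{..<n}. G k (x k))" using True by simp
    qed
    have ints: "(\<integral>y. G k y \<partial>Q k) = 1" for k
    proof -
      interpret prob_space "Q k" by (rule ps)
      show ?thesis
      proof (cases "k = i")
        case True
        have "(\<integral>y. G k y \<partial>Q k) = (\<integral>y. 1 \<partial>Q k)"
        proof (rule integral_cong_AE)
          show "(\<lambda>y. G k y) \<in> borel_measurable (Q k)"
            unfolding G_def by (subst measurable_cong_sets[OF st[of k] refl]) simp
          show "AE y in Q k. G k y = 1"
            unfolding G_def using nm[of k] by (rule AE_mp) (use True in \<open>auto intro!: AE_I2 simp: power2_norm_eq_inner[symmetric]\<close>)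
        qed simp
        thus ?thesis by (simp add: prob_space)
      next
        case False thus ?thesis unfolding G_def by (simp add: prob_space)
      qed
    qed
    show ?thesis unfolding eq
      using product_integrable_prod[of "{..<n}" G] product_integral_prod[of "{..<n}" G] Gint ints True
      by simp
  next
    case False
    define F where "F b b' k y = (if k \<in> {i, j} then (y \<bullet> b) * (y \<bullet> b') else (1::real))" for b b' :: 'a and k and y :: 'a
    have Fint: "integrable (Q k) (F b b' k)" if "b \<in> Basis" "b' \<in> Basis" for b b' k
    proof (cases "k \<in> {i, j}")
      case True
      show ?thesis unfolding F_def using True integ_inner2[OF ps st nm that] by simp
    next
      case False
      interpret prob_space "Q k" by (rule ps)
      show ?thesis unfolding F_def using False by simp
    qed
    have ints: "(\<integral>y. F b b' k y \<partial>Q k) = (if k \<in> {i, j} then mom (Q k) b b' else 1)" for b b' k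
    proof -
      interpret prob_space "Q k" by (rule ps)
      show ?thesis unfolding F_def mom_def by (simp add: prob_space)
    qed
    have pr: "(\<Prod>k\<in>{..<n}. (if k \<in> {i, j} then f k else 1)) = f i * f j" for f :: "nat \<Rightarrow> real"
    proof -
      have "(\<Prod>k\<in>{..<n}. (if k \<in> {i, j} then f k else 1)) = (\<Prod>k\<in>{..<n} \<inter> {i, j}. f k)"
        by (rule prod.inter_restrict[symmetric]) simp
      also have "{..<n} \<inter> {i, j} = {i, j}" using ij by auto
      finally show ?thesis using False by simp
    qed
    have eq: "(\<lambda>x. \<bar>x i \<bullet> x j\<bar>^2) = (\<lambda>x. \<Sum>b\<in>Basis. \<Sum>b'\<in>Basis. \<Prod>k\<in>{..<n}. F b b' k (x k))"
    proof
      fix x :: "nat \<Rightarrow> 'a"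
      have "(\<Prod>k\<in>{..<n}. F b b' k (x k)) = ((x i \<bullet> b) * (x i \<bullet> b')) * ((x j \<bullet> b) * (x j \<bullet> b'))" for b b'
        unfolding F_def using pr[of "\<lambda>k. (x k \<bullet> b) * (x k \<bullet> b')"] by simp
      thus "\<bar>x i \<bullet> x j\<bar>^2 = (\<Sum>b\<in>Basis. \<Sum>b'\<in>Basis. \<Prod>k\<in>{..<n}. F b b' k (x k))"
        by (simp add: inner_sq_expand)
    qed
    have pint: "integrable (PiM {..<n} Q) (\<lambda>x. \<Prod>k\<in>{..<n}. F b b' k (x k))" if "b \<in> Basis" "b' \<in> Basis" for b b'
      using product_integrable_prod[of "{..<n}" "F b b'"] Fint[OF that] by simp
    have pI: "(\<integral>x. (\<Prod>k\<in>{..<n}. F b b' k (x k)) \<partial>PiM {..<n} Q) = mom (Q i) b b' * mom (Q j) b b'"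
      if "b \<in> Basis" "b' \<in> Basis" for b b'
      using product_integral_prod[of "{..<n}" "F b b'"] Fint[OF that] ints pr[of "\<lambda>k. mom (Q k) b b'"] by simp
    show ?thesis unfolding eq using False pint pI
      by (simp add: integrable_sum Bochner_Integration.integral_sum)
  qed
qed



lemma inner_lower:
  fixes x y :: "'a::euclidean_space" and \<delta> :: real
  assumes "norm x = 1" "norm y = 1" "norm (x - y) \<le> \<delta>" "\<delta> < sqrt 2"
  shows "(1 - \<delta>^2/2)^2 \<le> (x \<bullet> y)^2"
proof -
  have nn: "0 \<le> \<delta>" using assms(3) norm_ge_zero order_trans by blast
  have "\<delta>^2 < (sqrt 2)^2" using assms(4) nn by (intro power_strict_mono) auto
  hence d2: "\<delta>^2 < 2" by simp
  have "norm (x - y)^2 = x \<bullet> x - 2 * (x \<bullet> y) + y \<bullet> y"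
    by (simp add: power2_norm_eq_inner inner_diff_left inner_diff_right inner_commute)
  also have "\<dots> = 2 - 2 * (x \<bullet> y)" using assms(1,2) by (simp add: power2_norm_eq_inner[symmetric])
  finally have e: "norm (x - y)^2 = 2 - 2 * (x \<bullet> y)" .
  have "norm (x - y)^2 \<le> \<delta>^2" using assms(3) by (intro power_mono) auto
  hence "1 - \<delta>^2/2 \<le> x \<bullet> y" using e by linarith
  moreover have "0 \<le> 1 - \<delta>^2/2" using d2 by linarith
  ultimately show ?thesis by (intro power_mono) auto
qed

lemma swap4:
  fixes a :: "nat \<Rightarrow> 'b \<Rightarrow> 'b \<Rightarrow> real"
  shows "(\<Sum>i\<in>I. \<Sum>j\<in>I. \<Sum>b\<in>B. \<Sum>b'\<in>B. a i b b' * a j b b') = (\<Sum>b\<in>B. \<Sum>b'\<in>B. (\<Sum>i\<in>I. a i b b')^2)"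
proof -
  have "(\<Sum>b\<in>B. \<Sum>b'\<in>B. (\<Sum>i\<in>I. a i b b')^2) = (\<Sum>b\<in>B. \<Sum>b'\<in>B. \<Sum>i\<in>I. \<Sum>j\<in>I. a i b b' * a j b b')"
    by (simp add: power2_eq_square sum_product)
  also have "\<dots> = (\<Sum>b\<in>B. \<Sum>i\<in>I. \<Sum>b'\<in>B. \<Sum>j\<in>I. a i b b' * a j b b')"
    by (rule sum.cong[OF refl], rule sum.swap)
  also have "\<dots> = (\<Sum>b\<in>B. \<Sum>i\<in>I. \<Sum>j\<in>I. \<Sum>b'\<in>B. a i b b' * a j b b')"
    by (rule sum.cong[OF refl], rule sum.cong[OF refl], rule sum.swap)
  also have "\<dots> = (\<Sum>i\<in>I. \<Sum>b\<in>B. \<Sum>j\<in>I. \<Sum>b'\<in>B. a i b b' * a j b b')"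
    by (rule sum.swap)
  also have "\<dots> = (\<Sum>i\<in>I. \<Sum>j\<in>I. \<Sum>b\<in>B. \<Sum>b'\<in>B. a i b b' * a j b b')"
    by (rule sum.cong[OF refl], rule sum.swap)
  finally show ?thesis by simp
qed

theorem theorem1:
  fixes D :: "nat \<Rightarrow> 'a::euclidean_space set" and n d :: nat and c :: real
  assumes "DIM('a) = d + 1" and "d \<ge> 1" and "n \<ge> 1"
    and "\<And>i. i < n \<Longrightarrow> D i \<in> sets borel"
    and "\<And>i. i < n \<Longrightarrow> D i \<subseteq> sphere 0 1"
    and "(\<Union>i<n. D i) = sphere 0 1"
    and "\<And>j k. j < n \<Longrightarrow> k < n \<Longrightarrow> j \<noteq> k \<Longrightarrow> measure sphere_measure (D j \<inter> D k) = 0"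
    and "\<And>i. i < n \<Longrightarrow> measure sphere_measure (D i) = 1 / real n"
    and "\<And>i. i < n \<Longrightarrow> diameter (D i) \<le> c / real n powr (1 / real d)"
    and "c / real n powr (1 / real d) < sqrt 2"
  shows "real n ^ 2 / real (d + 1) \<le> (\<integral>x. frame_potential n x \<partial>jittered n D)
    \<and> (\<integral>x. frame_potential n x \<partial>jittered n D)
        \<le> real n ^ 2 / real (d + 1) + real n
           - real n * (1 - c ^ 2 / (2 * real n powr (2 / real d))) ^ 2"
proof -
  note dim = assms(1) and n1 = assms(3) and meas = assms(4) and sub = assms(5) and cover = assms(6)
    and disj = assms(7) and msr = assms(8) and diam = assms(9) and dsq = assms(10)
  define \<delta> where "\<delta> = c / real n powr (1 / real d)"
  define L where "L = (1 - c ^ 2 / (2 * real n powr (2 / real d))) ^ 2"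
  have L\<delta>: "L = (1 - \<delta>^2/2)^2"
  proof -
    have "(real n powr (1 / real d))^2 = real n powr (2 / real d)"
      by (simp add: power2_eq_square powr_add[symmetric])
    thus ?thesis unfolding L_def \<delta>_def by (simp add: power_divide mult.commute)
  qed
  define Q where "Q i = (if i < n then uniform_measure sphere_measure (D i) else sphere_measure)" for i
  have Qps: "prob_space (Q i)" for i
    unfolding Q_def using unif_facts(1)[OF meas msr n1] prob_sphere by auto
  have Qst: "sets (Q i) = sets borel" for i
    unfolding Q_def by simp
  have QAE: "AE x in Q i. norm x = 1 \<and> (i < n \<longrightarrow> x \<in> D i)" for i
    unfolding Q_def using unif_facts(2)[OF meas msr n1, of i] AE_sphere_norm by auto
  have Qnm: "AE x in Q i. norm x = 1" for i using QAE[of i] by (rule AE_mp) (auto intro!: AE_I2)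
  have J: "jittered n D = PiM {..<n} Q"
    unfolding jittered_def by (rule PiM_cong) (auto simp: Q_def)
  define m where "m i b b' = mom (Q i) b b'" for i b b'
  define S where "S i j = (\<Sum>b\<in>Basis. \<Sum>b'\<in>Basis. m i b b' * m j b b')" for i j
  have pp: "integrable (PiM {..<n} Q) (\<lambda>x. \<bar>x i \<bullet> x j\<bar>^2) \<and>
         (\<integral>x. \<bar>x i \<bullet> x j\<bar>^2 \<partial>PiM {..<n} Q) = (if i = j then 1 else S i j)"
    if "i < n" "j < n" for i j
    using pim_pair[OF Qps Qst Qnm that] unfolding S_def m_def by simp
  have E: "(\<integral>x. frame_potential n x \<partial>jittered n D) = (\<Sum>i<n. \<Sum>j<n. (if i = j then 1 else S i j))"
  proof -
    have "(\<integral>x. (\<Sum>i<n. \<Sum>j<n. \<bar>x i \<bullet> x j\<bar>^2) \<partial>PiM {..<n} Q) = (\<Sum>i<n. \<integral>x. (\<Sum>j<n. \<bar>x i \<bullet> x j\<bar>^2) \<partial>PiM {..<n} Q)"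
      by (rule Bochner_Integration.integral_sum) (use pp in \<open>auto intro!: integrable_sum\<close>)
    also have "\<dots> = (\<Sum>i<n. \<Sum>j<n. \<integral>x. \<bar>x i \<bullet> x j\<bar>^2 \<partial>PiM {..<n} Q)"
      by (intro sum.cong refl Bochner_Integration.integral_sum) (use pp in auto)
    also have "\<dots> = (\<Sum>i<n. \<Sum>j<n. (if i = j then 1 else S i j))"
      by (intro sum.cong refl) (use pp in auto)
    finally show ?thesis unfolding J frame_potential_def .
  qed
  have E2: "(\<Sum>i<n. \<Sum>j<n. (if i = j then 1 else S i j)) = (\<Sum>i<n. \<Sum>j<n. S i j) + (\<Sum>i<n. 1 - S i i)"
  proof -
    have "(\<Sum>i<n. \<Sum>j<n. (if i = j then 1 else S i j)) = (\<Sum>i<n. \<Sum>j<n. S i j + (if i = j then 1 - S i i else 0))"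
      by (intro sum.cong) auto
    also have "\<dots> = (\<Sum>i<n. (\<Sum>j<n. S i j) + (1 - S i i))"
      by (intro sum.cong) (auto simp: sum.distrib)
    finally show ?thesis by (simp add: sum.distrib)
  qed
  have msum: "(\<Sum>i<n. m i b b') = real n * mom sphere_measure b b'" if "b \<in> Basis" "b' \<in> Basis" for b b'
  proof -
    have "(\<Sum>i<n. m i b b') = (\<Sum>i<n. real n * (\<integral>x. indicator (D i) x * ((x \<bullet> b) * (x \<bullet> b')) \<partial>sphere_measure))"
      unfolding m_def mom_def Q_def by (intro sum.cong refl) (simp add: unif_facts(3)[OF meas msr n1])
    also have "\<dots> = real n * mom sphere_measure b b'"
      unfolding mom_def sum_distrib_left[symmetric]
      by (subst partition_sum[OF meas cover disj]) (auto intro: integ_inner2[OF prob_sphere sets_sphere_measure AE_sphere_norm that])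
    finally show ?thesis .
  qed
  have Ssum: "(\<Sum>i<n. \<Sum>j<n. S i j) = real n ^ 2 / real (d + 1)"
  proof -
    have "(\<Sum>i<n. \<Sum>j<n. S i j) = (\<Sum>b\<in>(Basis::'a set). \<Sum>b'\<in>Basis. (\<Sum>i<n. m i b b')^2)"
      unfolding S_def by (rule swap4)
    also have "\<dots> = (\<Sum>b\<in>(Basis::'a set). \<Sum>b'\<in>Basis. (if b = b' then (real n / DIM('a))^2 else 0))"
      by (intro sum.cong refl) (auto simp: msum mom_off mom_diag)
    also have "\<dots> = real DIM('a) * (real n / DIM('a))^2" by simp
    also have "\<dots> = real n ^ 2 / real (d + 1)" using dim by (simp add: power2_eq_square)
    finally show ?thesis .
  qed
  have Sb: "L \<le> S i i \<and> S i i \<le> 1" if i: "i < n" for i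
  proof -
    have "L \<le> (\<Sum>b\<in>Basis. \<Sum>b'\<in>Basis. (mom (Q i) b b')^2) \<and> (\<Sum>b\<in>Basis. \<Sum>b'\<in>Basis. (mom (Q i) b b')^2) \<le> 1"
    proof (rule double_bounds[OF Qps Qst Qnm, where A="D i"])
      show "AE x in Q i. x \<in> D i" using QAE[of i] by (rule AE_mp) (use i in \<open>auto intro!: AE_I2\<close>)
      fix x y :: 'a assume xy: "x \<in> D i" "y \<in> D i" "norm x = 1" "norm y = 1"
      have bd: "bounded (D i)" using sub[OF i] bounded_subset[OF bounded_sphere] by blast
      have "norm (x - y) \<le> \<delta>"
        using diameter_bounded_bound[OF bd xy(1,2)] diam[OF i] by (simp add: \<delta>_def dist_norm)
      thus "L \<le> (x \<bullet> y)^2" unfolding L\<delta> using inner_lower[OF xy(3,4)] dsq by (simp add: \<delta>_def)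
    qed
    thus ?thesis unfolding S_def m_def by (simp add: power2_eq_square)
  qed
  have low: "0 \<le> (\<Sum>i<n. 1 - S i i)" using Sb by (intro sum_nonneg) auto
  have up: "(\<Sum>i<n. 1 - S i i) \<le> (\<Sum>i<n. 1 - L)" using Sb by (intro sum_mono) auto
  show ?thesis
    unfolding E E2 Ssum using low up by (simp add: L_def[symmetric] algebra_simps)
qed

end
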